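(* Let $k\ge 1$ be an integer and for $x_1,\dots,x_k\ge 1$ define $$F(x_1,\dots,x_k)=\frac{\sum_{i=1}^k i\left(1-\frac{1}{x_i}\right)}{\sum_{i=1}^k i\prod_{j=i+1}^k x_j}.$$ Then $\sup_{x_1,\dots,x_k\ge 1}F(x_1,\dots,x_k)=\frac{1}{k}$.
   Context: The empty product (for $i=k$) equals $1$. *)

theory Defs
  imports Complex_Main
begin

text \<open>F(x_1,...,x_k) with x given as a function on indices 1..k
  (values outside 1..k are irrelevant). The empty product equals 1.\<close>
definition F :: "nat \<Rightarrow> (nat \<Rightarrow> real) \<Rightarrow> real" where
  "F k x = (\<Sum>i=1..k. real i * (1 - 1 / x i)) /
           (\<Sum>i=1..k. real i * (\<Prod>j=i+1..k. x j))"

end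

theory Submission
  imports Defs
begin

lemma key:
  fixes u :: "nat \<Rightarrow> real"
  assumes pos: "\<And>i. i \<ge> 1 \<Longrightarrow> u i > 0" and m: "m \<ge> 1"
  shows "(\<Sum>i=1..m. u i) + (\<Sum>i=2..m. real (i - 1) * u i / u (i - 1))
          \<ge> real m * (real m + 1) / 2 + real m * ln (u m)"
  using m
proof (induction m rule: nat_induct_at_least)
  case base
  show ?case using ln_le_minus_one[OF pos[of 1]] by simp
next
  case (Suc m)
  have um: "u m > 0" using pos Suc.hyps by simp
  have us: "u (Suc m) > 0" using pos by simp
  have l1: "ln (u (Suc m)) \<le> u (Suc m) - 1" using ln_le_minus_one[OF us] .
  have l2: "ln (u (Suc m) / u m) \<le> u (Suc m) / u m - 1"
    using ln_le_minus_one um us by simp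
  have l3: "ln (u (Suc m) / u m) = ln (u (Suc m)) - ln (u m)" using ln_div um us by simp
  have s1: "(\<Sum>i=1..Suc m. u i) = (\<Sum>i=1..m. u i) + u (Suc m)" by simp
  have s2: "(\<Sum>i=2..Suc m. real (i - 1) * u i / u (i - 1))
      = (\<Sum>i=2..m. real (i - 1) * u i / u (i - 1)) + real m * (u (Suc m) / u m)"
    using Suc.hyps by simp
  have "real m * ln (u (Suc m) / u m) \<le> real m * (u (Suc m) / u m - 1)"
    using l2 by (simp add: mult_left_mono)
  then have l4: "real m * ln (u (Suc m)) - real m * ln (u m) \<le> real m * (u (Suc m) / u m) - real m"
    using l3 by (simp add: algebra_simps)
  have e: "real (Suc m) * (real (Suc m) + 1) / 2 = real m * (real m + 1) / 2 + real m + 1"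
    by (simp add: field_simps)
  show ?case unfolding s1 s2 e using Suc.IH l1 l4
    by (simp add: algebra_simps)
qed

lemma sum_id_real: "(\<Sum>i=1..k. real i) = real k * (real k + 1) / 2"
  by (induction k) (auto simp: field_simps)

lemma upper:
  fixes k :: nat and x :: "nat \<Rightarrow> real"
  assumes k: "k \<ge> 1" and x: "\<forall>i\<in>{1..k}. x i \<ge> 1"
  shows "F k x \<le> 1 / real k"
proof -
  define P where "P i = (\<Prod>j=i+1..k. x j)" for i
  define D where "D = (\<Sum>i=1..k. real i * P i)"
  define u where "u i = real i * P i / real k" for i
  have Pge: "P i \<ge> 1" for i unfolding P_def by (rule prod_ge_1) (use x in auto)
  have Pk: "P k = 1" unfolding P_def by simp
  have Prec: "P (i - 1) = x i * P i" if "2 \<le> i" "i \<le> k" for i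
  proof -
    have "P (i - 1) = (\<Prod>j=i..k. x j)" unfolding P_def using that by simp
    also have "\<dots> = x i * (\<Prod>j=Suc i..k. x j)" using that by (simp add: prod.atLeast_Suc_atMost)
    finally show ?thesis unfolding P_def by simp
  qed
  have upos: "u i > 0" if "i \<ge> 1" for i
    unfolding u_def using that k Pge[of i] by simp
  note K = key[of u k, OF upos k]
  have uk: "u k = 1" unfolding u_def Pk using k by simp
  have S1: "(\<Sum>i=1..k. u i) = D / real k" unfolding u_def D_def by (simp add: sum_divide_distrib)
  have S2: "(\<Sum>i=2..k. real (i - 1) * u i / u (i - 1)) = (\<Sum>i=2..k. real i / x i)"
  proof (rule sum.cong)
    fix i assume i: "i \<in> {2..k}"
    have xi: "x i \<ge> 1" using x i by auto
    have "real (i - 1) * u i / u (i - 1) = real (i - 1) * (real i * P i / real k) / (real (i - 1) * (x i * P i) / real k)"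
      unfolding u_def using Prec[of i] i by simp
    also have "\<dots> = real i / x i" using i xi Pge[of i] k by (simp add: field_simps)
    finally show "real (i - 1) * u i / u (i - 1) = real i / x i" .
  qed simp
  have Dpos: "D > 0" unfolding D_def
  proof (rule sum_pos)
    fix i assume "i \<in> {1..k}"
    then show "0 < real i * P i" using Pge[of i] by (simp add: less_le_trans[OF zero_less_one])
  qed (use k in auto)
  have N: "(\<Sum>i=1..k. real i * (1 - 1 / x i)) = real k * (real k + 1) / 2 - (\<Sum>i=1..k. real i / x i)"
  proof -
    have "(\<Sum>i=1..k. real i * (1 - 1 / x i)) = (\<Sum>i=1..k. real i - real i / x i)"
      by (simp add: algebra_simps)
    also have "\<dots> = (\<Sum>i=1..k. real i) - (\<Sum>i=1..k. real i / x i)"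
      by (rule sum_subtractf)
    finally show ?thesis by (simp only: sum_id_real)
  qed
  have T: "(\<Sum>i=1..k. real i / x i) = 1 / x 1 + (\<Sum>i=2..k. real i / x i)"
    using k by (simp add: sum.atLeast_Suc_atMost numeral_2_eq_2)
  have x1: "1 / x 1 \<ge> 0" using x k by (metis atLeastAtMost_iff le_numeral_extra(4) linorder_not_le order_less_le_trans zero_le_divide_1_iff zero_less_one_class.zero_le_one)
  have "(\<Sum>i=1..k. real i * (1 - 1 / x i)) \<le> D / real k"
  proof -
    have K': "D / real k + (\<Sum>i=2..k. real i / x i) \<ge> real k * (real k + 1) / 2"
      using K unfolding uk S1 S2 by simp
    show ?thesis unfolding N T using K' x1 by linarith
  qed
  then show ?thesis unfolding F_def D_def[symmetric] P_def[symmetric]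
    using Dpos k by (simp add: divide_simps mult.commute)
qed

lemma telprod:
  assumes "1 \<le> i" "i \<le> k"
  shows "(\<Prod>j=i+1..k. real j / (real j - 1)) = real k / real i"
  using assms(2)
proof (induction k rule: nat_induct_at_least)
  case base then show ?case using assms by simp
next
  case (Suc k)
  have "(\<Prod>j=i+1..Suc k. real j / (real j - 1)) = (real k / real i) * (real (Suc k) / real k)"
    using Suc by simp
  also have "\<dots> = real (Suc k) / real i" using Suc assms by simp
  finally show ?case .
qed

lemma witness:
  fixes k :: nat and t :: real
  assumes k: "k \<ge> 1" and t: "t \<ge> 1"
  defines "xt \<equiv> (\<lambda>i. if i \<le> 1 then t else real i / (real i - 1))"
  shows "\<forall>i\<in>{1..k}. xt i \<ge> 1" and "F k xt = 1 / real k - 1 / (t * real k ^ 2)"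
proof -
  show "\<forall>i\<in>{1..k}. xt i \<ge> 1" unfolding xt_def using t by (auto simp: field_simps)
  have D: "(\<Sum>i=1..k. real i * (\<Prod>j=i+1..k. xt j)) = real k * real k"
  proof -
    have "(\<Sum>i=1..k. real i * (\<Prod>j=i+1..k. xt j)) = (\<Sum>i=1..k. real k)"
    proof (rule sum.cong)
      fix i assume i: "i \<in> {1..k}"
      have "(\<Prod>j=i+1..k. xt j) = (\<Prod>j=i+1..k. real j / (real j - 1))"
        by (rule prod.cong) (use i in \<open>auto simp: xt_def\<close>)
      then show "real i * (\<Prod>j=i+1..k. xt j) = real k" using telprod[of i k] i by auto
    qed simp
    then show ?thesis by simp
  qed
  have N: "(\<Sum>i=1..k. real i * (1 - 1 / xt i)) = real k - 1 / t"
  proof -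
    have "(\<Sum>i=1..k. real i * (1 - 1 / xt i)) = (1 - 1 / t) + (\<Sum>i=2..k. real i * (1 - 1 / xt i))"
      using k by (simp add: sum.atLeast_Suc_atMost numeral_2_eq_2 xt_def)
    also have "(\<Sum>i=2..k. real i * (1 - 1 / xt i)) = (\<Sum>i=2..k. 1)"
    proof (rule sum.cong)
      fix i assume i: "i \<in> {2..k}"
      then have "real i - 1 > 0" by auto
      then show "real i * (1 - 1 / xt i) = 1" using i by (auto simp: xt_def field_simps)
    qed simp
    also have "\<dots> = real k - 1" using k by simp
    finally show ?thesis by simp
  qed
  show "F k xt = 1 / real k - 1 / (t * real k ^ 2)"
    unfolding F_def N D using k t by (simp add: field_simps power2_eq_square)
qed

lemma memS: "\<forall>i\<in>{1..k}. x i \<ge> 1 \<Longrightarrow> F k x \<in> {F k x | x. \<forall>i\<in>{1..k}. x i \<ge> 1}"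
  by auto

theorem theorem3:
  fixes k :: nat
  assumes "k \<ge> 1"
  shows "Sup {F k x | x. \<forall>i\<in>{1..k}. x i \<ge> 1} = 1 / real k"
proof (rule cSup_eq_non_empty)
  show "{F k x | x. \<forall>i\<in>{1..k}. x i \<ge> 1} \<noteq> {}"
    using memS[OF witness(1)[OF assms order_refl]] by (metis empty_iff)
  show "\<And>z. z \<in> {F k x | x. \<forall>i\<in>{1..k}. x i \<ge> 1} \<Longrightarrow> z \<le> 1 / real k"
    using upper[OF assms] by auto
  fix y assume ub: "\<And>z. z \<in> {F k x | x. \<forall>i\<in>{1..k}. x i \<ge> 1} \<Longrightarrow> z \<le> y"
  show "1 / real k \<le> y"
  proof (rule ccontr)
    assume "\<not> 1 / real k \<le> y"
    then have d: "1 / real k - y > 0" by simp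
    define c where "c = real k ^ 2 * (1 / real k - y)"
    have kp: "real k ^ 2 > 0" using assms by simp
    have cp: "c > 0" unfolding c_def using d kp by simp
    define t where "t = 1 + 1 / c"
    have t1: "t \<ge> 1" unfolding t_def using cp by simp
    have "F k (\<lambda>i. if i \<le> 1 then t else real i / (real i - 1)) \<le> y"
      by (rule ub[OF memS[OF witness(1)[OF assms t1]]])
    then have le: "1 / real k - 1 / (t * real k ^ 2) \<le> y" using witness(2)[OF assms t1] by simp
    have tc: "t * c = c + 1" unfolding t_def using cp by (simp add: distrib_right)
    have tk: "t * real k ^ 2 > 0" using t1 kp by simp
    have "1 < (1 / real k - y) * (t * real k ^ 2)"
      using tc cp unfolding c_def by (simp add: ac_simps)
    then have "1 / (t * real k ^ 2) < 1 / real k - y"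
      by (simp only: pos_divide_less_eq[OF tk])
    then show False using le by simp
  qed
qed

end
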